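(* There is no set $\mathcal{S}$ of Turing degrees such that $\mathbb{R}_{\mathcal{S}}$ is a Luzin set or a Sierpinski set.
   Context: $\mathbb{R}_{\mathcal{S}}$ is the set of reals whose Turing degree lies in $\mathcal{S}$. A set $A\subseteq\mathbb{R}$ is a Luzin set if it is uncountable and its intersection with every meager set is countable; it is a Sierpinski set if it is uncountable and its intersection with every Lebesgue null set is countable. *)

theory Defs
  imports "HOL-Analysis.Analysis"
begin

text \<open>Kleene-style mu-recursive programs with access to an orc set of naturals.
  Oracle n returns 1 if the first argument belongs to the query set, else 0.\<close>

datatype recf =
    Zero
  | Succ
  | Proj nat
  | Oracle
  | Comp recf "recf list"
  | PrimRec recf recf
  | Mu recf

inductive eval :: "nat set \<Rightarrow> recf \<Rightarrow> nat list \<Rightarrow> nat \<Rightarrow> bool" for X :: "nat set" where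
  zero: "eval X Zero xs 0"
| succ: "eval X Succ (x # xs) (Suc x)"
| proj: "i < length xs \<Longrightarrow> eval X (Proj i) xs (xs ! i)"
| orc: "eval X Oracle (x # xs) (if x \<in> X then 1 else 0)"
| comp: "list_all2 (\<lambda>g y. eval X g xs y) gs ys \<Longrightarrow> eval X f ys z \<Longrightarrow> eval X (Comp f gs) xs z"
| prim0: "eval X f xs y \<Longrightarrow> eval X (PrimRec f g) (0 # xs) y"
| primS: "eval X (PrimRec f g) (n # xs) y \<Longrightarrow> eval X g (n # y # xs) z
          \<Longrightarrow> eval X (PrimRec f g) (Suc n # xs) z"
| mu: "eval X f (n # xs) 0 \<Longrightarrow> (\<forall>m<n. \<exists>k. k > 0 \<and> eval X f (m # xs) k)
          \<Longrightarrow> eval X (Mu f) xs n"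

definition turing_le :: "nat set \<Rightarrow> nat set \<Rightarrow> bool" where
  "turing_le A B \<longleftrightarrow> (\<exists>p. \<forall>n. eval B p [n] (if n \<in> A then 1 else 0))"

definition rat_code :: "nat \<Rightarrow> real" where
  "rat_code n = (case prod_decode n of (i, b) \<Rightarrow> real_of_int (int_decode i) / real (Suc b))"

text \<open>A real is identified (for computability purposes) with its left Dedekind cut,
  coded as a set of naturals.\<close>
definition real_code :: "real \<Rightarrow> nat set" where
  "real_code x = {n. rat_code n < x}"

definition turing_equiv_real :: "real \<Rightarrow> real \<Rightarrow> bool" where
  "turing_equiv_real x y \<longleftrightarrow> turing_le (real_code x) (real_code y) \<and> turing_le (real_code y) (real_code x)"

definition turing_degree :: "real \<Rightarrow> real set" where
  "turing_degree x = {y. turing_equiv_real y x}"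

definition turing_degrees :: "real set set" where
  "turing_degrees = range turing_degree"

definition reals_of_degrees :: "real set set \<Rightarrow> real set" where
  "reals_of_degrees S = {x. turing_degree x \<in> S}"

definition nowhere_dense :: "real set \<Rightarrow> bool" where
  "nowhere_dense A \<longleftrightarrow> interior (closure A) = {}"

definition meager :: "real set \<Rightarrow> bool" where
  "meager M \<longleftrightarrow> (\<exists>F :: nat \<Rightarrow> real set. (\<forall>n. nowhere_dense (F n)) \<and> M \<subseteq> (\<Union>n. F n))"

definition luzin_set :: "real set \<Rightarrow> bool" where
  "luzin_set A \<longleftrightarrow> uncountable A \<and> (\<forall>M. meager M \<longrightarrow> countable (A \<inter> M))"

definition sierpinski_set :: "real set \<Rightarrow> bool" where
  "sierpinski_set A \<longleftrightarrow> uncountable A \<and> (\<forall>N. N \<in> null_sets lebesgue \<longrightarrow> countable (A \<inter> N))"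

end

theory Submission
  imports Defs
begin


definition rc :: "nat set \<Rightarrow> nat \<Rightarrow> (nat list \<Rightarrow> nat) \<Rightarrow> bool" where
  "rc X k f \<longleftrightarrow> (\<exists>p. \<forall>xs. length xs = k \<longrightarrow> eval X p xs (f xs))"

lemma rc_cong: "rc X k f \<Longrightarrow> (\<And>xs. length xs = k \<Longrightarrow> f xs = g xs) \<Longrightarrow> rc X k g"
  unfolding rc_def by metis

lemma rc_zero: "rc X k (\<lambda>xs. 0)"
  unfolding rc_def by (auto intro: eval.zero)

lemma rc_proj: "i < k \<Longrightarrow> rc X k (\<lambda>xs. xs ! i)"
  unfolding rc_def by (rule exI[of _ "Proj i"]) (auto intro: eval.proj)

lemma rc_succ: "rc X k f \<Longrightarrow> rc X k (\<lambda>xs. Suc (f xs))"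
  unfolding rc_def
proof (elim exE)
  fix p assume p: "\<forall>xs. length xs = k \<longrightarrow> eval X p xs (f xs)"
  show "\<exists>p. \<forall>xs. length xs = k \<longrightarrow> eval X p xs (Suc (f xs))"
    proof (intro exI[of _ "Comp Succ [p]"] allI impI)
      fix xs :: "nat list" assume "length xs = k"
      then show "eval X (Comp Succ [p]) xs (Suc (f xs))"
        by (intro eval.comp[where ys="[f xs]"]) (auto intro: eval.succ p[rule_format])
    qed
qed

lemma rc_orc: "rc X k f \<Longrightarrow> rc X k (\<lambda>xs. if f xs \<in> X then 1 else 0)"
  unfolding rc_def
proof (elim exE)
  fix p assume p: "\<forall>xs. length xs = k \<longrightarrow> eval X p xs (f xs)"
  show "\<exists>p. \<forall>xs. length xs = k \<longrightarrow> eval X p xs (if f xs \<in> X then 1 else 0)"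
    proof (intro exI[of _ "Comp Oracle [p]"] allI impI)
      fix xs :: "nat list" assume l: "length xs = k"
      show "eval X (Comp Oracle [p]) xs (if f xs \<in> X then 1 else 0)"
        by (rule eval.comp[where ys="[f xs]"]) (simp add: p l, rule eval.orc)
    qed
qed

lemma rc_comp1: "rc X 1 h \<Longrightarrow> rc X k f \<Longrightarrow> rc X k (\<lambda>xs. h [f xs])"
  unfolding rc_def
proof (elim exE)
  fix p q assume q: "\<forall>xs. length xs = 1 \<longrightarrow> eval X q xs (h xs)"
    and p: "\<forall>xs. length xs = k \<longrightarrow> eval X p xs (f xs)"
  show "\<exists>p. \<forall>xs. length xs = k \<longrightarrow> eval X p xs (h [f xs])"
    proof (intro exI[of _ "Comp q [p]"] allI impI)
      fix xs :: "nat list" assume "length xs = k"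
      then show "eval X (Comp q [p]) xs (h [f xs])"
        by (intro eval.comp[where ys="[f xs]"]) (auto intro: q[rule_format] p[rule_format])
    qed
qed

lemma rc_comp2: "rc X 2 h \<Longrightarrow> rc X k f \<Longrightarrow> rc X k g \<Longrightarrow> rc X k (\<lambda>xs. h [f xs, g xs])"
  unfolding rc_def
proof (elim exE)
  fix p q r assume q: "\<forall>xs. length xs = 2 \<longrightarrow> eval X q xs (h xs)"
    and p: "\<forall>xs. length xs = k \<longrightarrow> eval X p xs (f xs)"
    and r: "\<forall>xs. length xs = k \<longrightarrow> eval X r xs (g xs)"
  show "\<exists>p. \<forall>xs. length xs = k \<longrightarrow> eval X p xs (h [f xs, g xs])"
    proof (intro exI[of _ "Comp q [p, r]"] allI impI)
      fix xs :: "nat list" assume "length xs = k"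
      then show "eval X (Comp q [p, r]) xs (h [f xs, g xs])"
        by (intro eval.comp[where ys="[f xs, g xs]"]) (auto intro: q[rule_format] p[rule_format] r[rule_format])
    qed
qed

lemma rc_comp3: "rc X 3 h \<Longrightarrow> rc X k f \<Longrightarrow> rc X k g \<Longrightarrow> rc X k l \<Longrightarrow> rc X k (\<lambda>xs. h [f xs, g xs, l xs])"
  unfolding rc_def
proof (elim exE)
  fix p q r s assume q: "\<forall>xs. length xs = 3 \<longrightarrow> eval X q xs (h xs)"
    and p: "\<forall>xs. length xs = k \<longrightarrow> eval X p xs (f xs)"
    and r: "\<forall>xs. length xs = k \<longrightarrow> eval X r xs (g xs)"
    and s: "\<forall>xs. length xs = k \<longrightarrow> eval X s xs (l xs)"
  show "\<exists>p. \<forall>xs. length xs = k \<longrightarrow> eval X p xs (h [f xs, g xs, l xs])"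
    proof (intro exI[of _ "Comp q [p, r, s]"] allI impI)
      fix xs :: "nat list" assume "length xs = k"
      then show "eval X (Comp q [p, r, s]) xs (h [f xs, g xs, l xs])"
        by (intro eval.comp[where ys="[f xs, g xs, l xs]"]) (auto intro: q[rule_format] p[rule_format] r[rule_format] s[rule_format])
    qed
qed

lemma rc_prim: "rc X k f \<Longrightarrow> rc X (Suc (Suc k)) g \<Longrightarrow>
  rc X (Suc k) (\<lambda>xs. rec_nat (f (tl xs)) (\<lambda>n y. g (n # y # tl xs)) (hd xs))"
  unfolding rc_def
proof (elim exE)
  fix p q assume p: "\<forall>xs. length xs = k \<longrightarrow> eval X p xs (f xs)"
    and q: "\<forall>xs. length xs = Suc (Suc k) \<longrightarrow> eval X q xs (g xs)"
  have "eval X (PrimRec p q) (n # ys) (rec_nat (f ys) (\<lambda>n y. g (n # y # ys)) n)"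
    if "length ys = k" for n ys
    using that
  proof (induction n)
    case 0 then show ?case by (auto intro: eval.prim0 p[rule_format])
  next
    case (Suc n)
    show ?case by (rule eval.primS[OF Suc.IH[OF Suc.prems]]) (use Suc.prems q in simp)
  qed
  then show "\<exists>p. \<forall>xs. length xs = Suc k \<longrightarrow> eval X p xs (rec_nat (f (tl xs)) (\<lambda>n y. g (n # y # tl xs)) (hd xs))"
    by (intro exI[of _ "PrimRec p q"]) (auto simp: length_Suc_conv)
qed

lemma rc_mu: "rc X (Suc k) f \<Longrightarrow> (\<And>xs. length xs = k \<Longrightarrow> \<exists>n. f (n # xs) = 0) \<Longrightarrow>
  rc X k (\<lambda>xs. LEAST n. f (n # xs) = 0)"
  unfolding rc_def
proof (elim exE)
  fix p assume p: "\<forall>xs. length xs = Suc k \<longrightarrow> eval X p xs (f xs)"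
    and ex: "\<And>xs. length xs = k \<Longrightarrow> \<exists>n. f (n # xs) = 0"
  show "\<exists>p. \<forall>xs. length xs = k \<longrightarrow> eval X p xs (LEAST n. f (n # xs) = 0)"
  proof (intro exI[of _ "Mu p"] allI impI)
    fix xs :: "nat list" assume l: "length xs = k"
    let ?n = "LEAST n. f (n # xs) = 0"
    have z: "f (?n # xs) = 0" using ex[OF l] by (rule LeastI_ex)
    have nz: "\<forall>m<?n. \<exists>k>0. eval X p (m # xs) k"
    proof (intro allI impI)
      fix m assume "m < ?n"
      then have "f (m # xs) \<noteq> 0" using not_less_Least by blast
      then show "\<exists>k>0. eval X p (m # xs) k" using p l by auto
    qed
    show "eval X (Mu p) xs ?n"
    proof (rule eval.mu)
      show "eval X p (?n # xs) 0" using p l z by (metis length_Cons)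
    qed (rule nz)
  qed
qed

lemma rc_prim_gen:
  assumes "rc X k f" "rc X (Suc (Suc k)) g"
    and "\<And>n ys. length ys = k \<Longrightarrow> h (n # ys) = rec_nat (f ys) (\<lambda>n y. g (n # y # ys)) n"
  shows "rc X (Suc k) h"
  by (rule rc_cong[OF rc_prim[OF assms(1,2)]]) (auto simp: length_Suc_conv assms(3))

lemma rc_const: "rc X k (\<lambda>xs. c)"
  by (induction c) (auto intro: rc_zero rc_succ)

lemma rc_add2: "rc X 2 (\<lambda>xs. xs ! 0 + xs ! 1)"
proof -
  have "rc X (Suc 1) (\<lambda>xs. xs ! 0 + xs ! 1)"
  proof (rule rc_prim_gen[OF rc_proj[of 0 1] rc_succ[OF rc_proj[of 1 "Suc (Suc 1)"]]])
    fix n :: nat and ys :: "nat list"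
    show "(n # ys) ! 0 + (n # ys) ! 1 = rec_nat (ys ! 0) (\<lambda>n y. Suc ((n # y # ys) ! 1)) n"
      by (induction n) auto
  qed simp_all
  then show ?thesis by (simp add: numeral_2_eq_2)
qed

lemma rc_add: "rc X k f \<Longrightarrow> rc X k g \<Longrightarrow> rc X k (\<lambda>xs. f xs + g xs)"
  by (rule rc_cong[OF rc_comp2[OF rc_add2]]) auto

lemma rc_mult2: "rc X 2 (\<lambda>xs. xs ! 0 * xs ! 1)"
proof -
  have "rc X (Suc 1) (\<lambda>xs. xs ! 0 * xs ! 1)"
  proof (rule rc_prim_gen[OF rc_zero rc_add[OF rc_proj[of 1 "Suc (Suc 1)"] rc_proj[of 2 "Suc (Suc 1)"]]])
    fix n :: nat and ys :: "nat list"
    show "(n # ys) ! 0 * (n # ys) ! 1 = rec_nat 0 (\<lambda>n y. (n # y # ys) ! 1 + (n # y # ys) ! 2) n"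
      by (induction n) auto
  qed simp_all
  then show ?thesis by (simp add: numeral_2_eq_2)
qed

lemma rc_mult: "rc X k f \<Longrightarrow> rc X k g \<Longrightarrow> rc X k (\<lambda>xs. f xs * g xs)"
  by (rule rc_cong[OF rc_comp2[OF rc_mult2]]) auto

lemma rc_pred1: "rc X 1 (\<lambda>xs. xs ! 0 - 1)"
proof -
  have "rc X (Suc 0) (\<lambda>xs. xs ! 0 - 1)"
  proof (rule rc_prim_gen[OF rc_zero rc_proj[of 0 "Suc (Suc 0)"]])
    fix n :: nat and ys :: "nat list"
    show "(n # ys) ! 0 - 1 = rec_nat 0 (\<lambda>n y. (n # y # ys) ! 0) n"
      by (induction n) auto
  qed simp_all
  then show ?thesis by (simp add: numeral_2_eq_2)
qed

lemma rc_pred: "rc X k f \<Longrightarrow> rc X k (\<lambda>xs. f xs - 1)"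
  by (rule rc_cong[OF rc_comp1[OF rc_pred1]]) auto

lemma rc_sub2: "rc X 2 (\<lambda>xs. xs ! 1 - xs ! 0)"
proof -
  have "rc X (Suc 1) (\<lambda>xs. xs ! 1 - xs ! 0)"
  proof (rule rc_prim_gen[OF rc_proj[of 0 1] rc_pred[OF rc_proj[of 1 "Suc (Suc 1)"]]])
    fix n :: nat and ys :: "nat list"
    show "(n # ys) ! 1 - (n # ys) ! 0 = rec_nat (ys ! 0) (\<lambda>n y. (n # y # ys) ! 1 - 1) n"
      by (induction n) auto
  qed simp_all
  then show ?thesis by (simp add: numeral_2_eq_2)
qed

lemma rc_sub: "rc X k f \<Longrightarrow> rc X k g \<Longrightarrow> rc X k (\<lambda>xs. f xs - g xs)"
  by (rule rc_cong[OF rc_comp2[OF rc_sub2]]) auto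

lemma rc_pow3_1: "rc X 1 (\<lambda>xs. 3 ^ (xs ! 0))"
proof -
  have "rc X (Suc 0) (\<lambda>xs. 3 ^ (xs ! 0))"
  proof (rule rc_prim_gen[OF rc_const[of X 0 1] rc_mult[OF rc_const[of X _ 3] rc_proj[of 1 "Suc (Suc 0)"]]])
    fix n :: nat and ys :: "nat list"
    show "3 ^ ((n # ys) ! 0) = rec_nat 1 (\<lambda>n y. 3 * (n # y # ys) ! 1) n"
      by (induction n) auto
  qed simp_all
  then show ?thesis by (simp add: numeral_2_eq_2)
qed

lemma rc_pow3: "rc X k f \<Longrightarrow> rc X k (\<lambda>xs. 3 ^ f xs)"
  by (rule rc_cong[OF rc_comp1[OF rc_pow3_1]]) auto

lemma rc_tri1: "rc X 1 (\<lambda>xs. triangle (xs ! 0))"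
proof -
  have "rc X (Suc 0) (\<lambda>xs. triangle (xs ! 0))"
  proof (rule rc_prim_gen[OF rc_zero rc_add[OF rc_proj[of 1 "Suc (Suc 0)"] rc_succ[OF rc_proj[of 0 "Suc (Suc 0)"]]]])
    fix n :: nat and ys :: "nat list"
    show "triangle ((n # ys) ! 0) = rec_nat 0 (\<lambda>n y. (n # y # ys) ! 1 + Suc ((n # y # ys) ! 0)) n"
      by (induction n) auto
  qed simp_all
  then show ?thesis by (simp add: numeral_2_eq_2)
qed

lemma rc_tri: "rc X k f \<Longrightarrow> rc X k (\<lambda>xs. triangle (f xs))"
  by (rule rc_cong[OF rc_comp1[OF rc_tri1]]) auto

lemma rc_sg1: "rc X 1 (\<lambda>xs. if xs ! 0 = 0 then 0 else 1)"
proof -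
  have "rc X (Suc 0) (\<lambda>xs. if xs ! 0 = 0 then 0 else 1)"
  proof (rule rc_prim_gen[OF rc_zero rc_const[of X _ 1]])
    fix n :: nat and ys :: "nat list"
    show "(if (n # ys) ! 0 = 0 then 0 else 1) = rec_nat 0 (\<lambda>n y. 1) n"
      by (induction n) auto
  qed
  then show ?thesis by (simp add: numeral_2_eq_2)
qed

lemma rc_sg: "rc X k f \<Longrightarrow> rc X k (\<lambda>xs. if f xs = 0 then 0 else 1)"
  by (rule rc_cong[OF rc_comp1[OF rc_sg1]]) auto

definition rcp :: "nat set \<Rightarrow> nat \<Rightarrow> (nat list \<Rightarrow> bool) \<Rightarrow> bool" where
  "rcp X k P \<longleftrightarrow> rc X k (\<lambda>xs. if P xs then 1 else 0)"

lemma rcp_less: assumes "rc X k f" "rc X k g" shows "rcp X k (\<lambda>xs. f xs < g xs)"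
  unfolding rcp_def by (rule rc_cong[OF rc_sg[OF rc_sub[OF assms(2,1)]]]) auto

lemma rcp_not: assumes "rcp X k P" shows "rcp X k (\<lambda>xs. \<not> P xs)"
  using assms unfolding rcp_def by (intro rc_cong[OF rc_sub[OF rc_const[of X k 1] assms[unfolded rcp_def]]]) auto

lemma rcp_conj: assumes "rcp X k P" "rcp X k Q" shows "rcp X k (\<lambda>xs. P xs \<and> Q xs)"
  unfolding rcp_def by (rule rc_cong[OF rc_mult[OF assms[unfolded rcp_def]]]) auto

lemma rcp_disj: assumes "rcp X k P" "rcp X k Q" shows "rcp X k (\<lambda>xs. P xs \<or> Q xs)"
  unfolding rcp_def by (rule rc_cong[OF rc_sg[OF rc_add[OF assms[unfolded rcp_def]]]]) auto

lemma rcp_mem: "rc X k f \<Longrightarrow> rcp X k (\<lambda>xs. f xs \<in> X)"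
  unfolding rcp_def by (rule rc_orc)

lemma rc_if: assumes "rcp X k P" "rc X k f" "rc X k g" shows "rc X k (\<lambda>xs. if P xs then f xs else g xs)"
  by (rule rc_cong[OF rc_add[OF rc_mult[OF assms(1)[unfolded rcp_def] assms(2)]
     rc_mult[OF rc_sub[OF rc_const[of X k 1] assms(1)[unfolded rcp_def]] assms(3)]]]) auto

lemma rc_even1: "rc X 1 (\<lambda>xs. if even (xs ! 0) then 1 else 0)"
proof -
  have "rc X (Suc 0) (\<lambda>xs. if even (xs ! 0) then 1 else 0)"
  proof (rule rc_prim_gen[OF rc_const[of X 0 1] rc_sub[OF rc_const[of X _ 1] rc_proj[of 1 "Suc (Suc 0)"]]])
    fix n :: nat and ys :: "nat list"
    show "(if even ((n # ys) ! 0) then 1 else 0) = rec_nat 1 (\<lambda>n y. 1 - (n # y # ys) ! 1) n"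
      by (induction n) auto
  qed simp_all
  then show ?thesis by (simp add: numeral_2_eq_2)
qed

lemma rcp_even: "rc X k f \<Longrightarrow> rcp X k (\<lambda>xs. even (f xs))"
  unfolding rcp_def by (rule rc_cong[OF rc_comp1[OF rc_even1]]) auto

lemma rc_div2_1: "rc X 1 (\<lambda>xs. xs ! 0 div 2)"
proof -
  have "rc X (Suc 0) (\<lambda>xs. xs ! 0 div 2)"
  proof (rule rc_prim_gen[OF rc_zero rc_if[OF rcp_even[OF rc_proj[of 0 "Suc (Suc 0)"]] rc_proj[of 1 "Suc (Suc 0)"] rc_succ[OF rc_proj[of 1 "Suc (Suc 0)"]]]])
    fix n :: nat and ys :: "nat list"
    show "(n # ys) ! 0 div 2 = rec_nat 0 (\<lambda>n y. if even ((n # y # ys) ! 0) then (n # y # ys) ! 1 else Suc ((n # y # ys) ! 1)) n"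
      by (induction n) (auto elim: oddE)
  qed simp_all
  then show ?thesis by (simp add: numeral_2_eq_2)
qed

lemma rc_div2: "rc X k f \<Longrightarrow> rc X k (\<lambda>xs. f xs div 2)"
  by (rule rc_cong[OF rc_comp1[OF rc_div2_1]]) auto

lemma rc_mu_pred: "rcp X (Suc k) P \<Longrightarrow> (\<And>xs. length xs = k \<Longrightarrow> \<exists>n. P (n # xs)) \<Longrightarrow>
  rc X k (\<lambda>xs. LEAST n. P (n # xs))"
  unfolding rcp_def
proof -
  assume a: "rc X (Suc k) (\<lambda>xs. if P xs then 1 else 0)" and e: "\<And>xs. length xs = k \<Longrightarrow> \<exists>n. P (n # xs)"
  have "rc X k (\<lambda>xs. LEAST n. (1 - (if P (n # xs) then 1 else 0)) = (0::nat))"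
    by (rule rc_mu[OF rc_sub[OF rc_const a]]) (use e in auto)
  moreover have "\<And>n xs. ((1::nat) - (if P (n # xs) then 1 else 0) = 0) = P (n # xs)" by auto
  ultimately show ?thesis by simp
qed


fun osub :: "recf \<Rightarrow> recf \<Rightarrow> recf" where
  "osub p Oracle = Comp p [Proj 0]"
| "osub p (Comp f gs) = Comp (osub p f) (map (osub p) gs)"
| "osub p (PrimRec f g) = PrimRec (osub p f) (osub p g)"
| "osub p (Mu f) = Mu (osub p f)"
| "osub p Zero = Zero"
| "osub p Succ = Succ"
| "osub p (Proj i) = Proj i"

lemma eval_osub:
  assumes "eval B q xs z" and p: "\<forall>n. eval C p [n] (if n \<in> B then 1 else 0)"
  shows "eval C (osub p q) xs z"
  using assms(1)
proof (induction rule: eval.induct)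
  case (zero xs) then show ?case by (auto intro: eval.zero)
next
  case (succ x xs) then show ?case by (auto intro: eval.succ)
next
  case (proj i xs) then show ?case by (auto intro: eval.proj)
next
  case (orc x xs)
  have "eval C (Comp p [Proj 0]) (x # xs) (if x \<in> B then 1 else 0)"
  proof (rule eval.comp[where ys="[x]"])
    show "list_all2 (\<lambda>g. eval C g (x # xs)) [Proj 0] [x]"
      using eval.proj[of 0 "x # xs" C] by simp
  qed (rule p[rule_format])
  then show ?case by simp
next
  case (comp xs gs ys f z)
  have "list_all2 (\<lambda>g y. eval C g xs y) (map (osub p) gs) ys"
    using comp(1) by (auto simp: list_all2_map1 elim: list_all2_mono)
  moreover have "eval C (osub p f) ys z" using comp by blast
  ultimately show ?case by (simp add: eval.comp)
next
  case (prim0 f xs y) then show ?case by (auto intro: eval.prim0)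
next
  case (primS f g n xs y z) then show ?case by (auto intro: eval.primS)
next
  case (mu f n xs) then show ?case by (auto intro!: eval.mu)
qed

lemma turing_le_trans: "turing_le A B \<Longrightarrow> turing_le B C \<Longrightarrow> turing_le A C"
  unfolding turing_le_def using eval_osub by blast

lemma turing_le_refl: "turing_le A A"
  unfolding turing_le_def using eval.orc[of A _ "[]"] by blast

lemma turing_degree_eq:
  assumes "turing_equiv_real x y" shows "turing_degree x = turing_degree y"
  using assms unfolding turing_degree_def turing_equiv_real_def
  by (auto intro: turing_le_trans)

definition tm :: "nat set \<Rightarrow> nat \<Rightarrow> real" where
  "tm A k = (if k \<in> A then 2 / 3 ^ Suc k else 0)"

definition FF :: "nat set \<Rightarrow> real" where
  "FF A = suminf (tm A)"

fun Ns :: "nat set \<Rightarrow> nat \<Rightarrow> nat" where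
  "Ns A 0 = 0"
| "Ns A (Suc n) = 3 * Ns A n + (if n \<in> A then 2 else 0)"

lemma tm_nonneg: "0 \<le> tm A k"
  by (simp add: tm_def)

lemma tm_le: "tm A k \<le> (2/3) * (1/3) ^ k"
  by (simp add: tm_def power_divide)

lemma summable_geo3: "summable (\<lambda>k. (2/3) * (1/3::real) ^ (k + n))"
  by (simp add: power_add summable_mult2[OF summable_mult[OF summable_geometric]] mult.assoc[symmetric])

lemma summable_tm: "summable (tm A)"
  by (rule summable_comparison_test[OF _ summable_geo3[of 0]]) (metis abs_of_nonneg add_0_right real_norm_def tm_le tm_nonneg)

lemma geo3_sum: "(\<Sum>k. (2/3) * (1/3::real) ^ (k + n)) = 1 / 3 ^ n"
proof -
  have "(\<Sum>k. (2/3) * (1/3::real) ^ (k + n)) = (2/3) * (1/3)^n * (\<Sum>k. (1/3::real) ^ k)"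
    by (subst suminf_mult[symmetric]) (auto simp: power_add mult_ac summable_geometric)
  also have "(\<Sum>k. (1/3::real) ^ k) = 3/2"
    by (subst suminf_geometric) auto
  finally show ?thesis by (simp add: power_divide)
qed

lemma Ns_partial: "real (Ns A n) / 3 ^ n = (\<Sum>k<n. tm A k)"
proof (induction n)
  case 0 then show ?case by simp
next
  case (Suc n)
  have "real (Ns A (Suc n)) / 3 ^ Suc n = real (Ns A n) / 3 ^ n + tm A n"
    by (simp add: tm_def field_simps)
  then show ?case using Suc by simp
qed

lemma FF_split: "FF A = real (Ns A n) / 3 ^ n + (\<Sum>k. tm A (k + n))"
  unfolding FF_def Ns_partial using suminf_split_initial_segment[OF summable_tm, of A n] by simp

lemma tail_bounds: "0 \<le> (\<Sum>k. tm A (k + n))" "(\<Sum>k. tm A (k + n)) \<le> 1 / 3 ^ n"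
proof -
  have s: "summable (\<lambda>k. tm A (k + n))"
    using summable_tm[of A] by (simp add: summable_iff_shift)
  show "0 \<le> (\<Sum>k. tm A (k + n))" by (rule suminf_nonneg[OF s]) (simp add: tm_nonneg)
  have "(\<Sum>k. tm A (k + n)) \<le> (\<Sum>k. (2/3) * (1/3::real) ^ (k + n))"
    by (rule suminf_le[OF _ s summable_geo3]) (rule tm_le)
  then show "(\<Sum>k. tm A (k + n)) \<le> 1 / 3 ^ n" by (simp only: geo3_sum)
qed

lemma FF_lower: "real (Ns A n) / 3 ^ n \<le> FF A"
  using FF_split[of A n] tail_bounds(1)[of A n] by linarith

lemma FF_upper: "FF A \<le> (real (Ns A n) + 1) / 3 ^ n"
  using FF_split[of A n] tail_bounds(2)[of A n] by (simp add: add_divide_distrib)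

lemma FF_nonneg: "0 \<le> FF A"
  using FF_lower[of A 0] by simp

lemma FF_key: "n \<in> A \<longleftrightarrow> (6 * real (Ns A n) + 3) / (2 * 3 ^ Suc n) < FF A"
proof -
  have lo: "real (Ns A (Suc n)) / 3 ^ Suc n \<le> FF A" by (rule FF_lower)
  have up: "FF A \<le> (real (Ns A (Suc n)) + 1) / 3 ^ Suc n" by (rule FF_upper)
  have e: "(6 * real (Ns A n) + 3) / (2 * 3 ^ Suc n) = (3 * real (Ns A n) + 3/2) / 3 ^ Suc n"
    by (simp add: field_simps)
  show ?thesis
  proof (cases "n \<in> A")
    case True
    then have "(3 * real (Ns A n) + 3/2) / 3 ^ Suc n < real (Ns A (Suc n)) / 3 ^ Suc n"
      by (simp add: divide_strict_right_mono)
    then show ?thesis using True lo e by linarith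
  next
    case False
    then have "(real (Ns A (Suc n)) + 1) / 3 ^ Suc n < (3 * real (Ns A n) + 3/2) / 3 ^ Suc n"
      by (simp add: divide_strict_right_mono)
    then show ?thesis using False up e by linarith
  qed
qed

lemma FF_inj: assumes "FF A = FF B" shows "A = B"
proof -
  have "Ns A n = Ns B n \<and> (n \<in> A \<longleftrightarrow> n \<in> B)" for n
  proof (induction n)
    case 0 then show ?case using FF_key[of 0 A] FF_key[of 0 B] assms by simp
  next
    case (Suc n)
    then have "Ns A (Suc n) = Ns B (Suc n)" by simp
    then show ?case using FF_key[of "Suc n" A] FF_key[of "Suc n" B] assms by simp
  qed
  then show ?thesis by blast
qed


definition qcode :: "nat \<Rightarrow> nat \<Rightarrow> nat" where
  "qcode n N = prod_encode (12 * N + 6, 2 * 3 ^ Suc n - 1)"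

lemma rat_code_qcode: "rat_code (qcode n N) = (6 * real N + 3) / (2 * 3 ^ Suc n)"
proof -
  have "int_decode (12 * N + 6) = int (6 * N + 3)"
    by (simp add: int_decode_def sum_decode_def)
  moreover have "Suc (2 * 3 ^ Suc n - 1) = 2 * 3 ^ Suc n" by simp
  ultimately show ?thesis
    unfolding rat_code_def qcode_def by simp
qed

lemma qcode_mem: "qcode n (Ns A n) \<in> real_code (FF A) \<longleftrightarrow> n \<in> A"
  unfolding real_code_def by (simp add: rat_code_qcode FF_key[of n A])

fun Nq :: "nat set \<Rightarrow> nat \<Rightarrow> nat" where
  "Nq Y 0 = 0"
| "Nq Y (Suc n) = 3 * Nq Y n + (if qcode n (Nq Y n) \<in> Y then 2 else 0)"

lemma Nq_eq: "Nq (real_code (FF A)) n = Ns A n"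
  by (induction n) (simp_all add: qcode_mem)

lemma rc_qcode: assumes "rc X k f" "rc X k g" shows "rc X k (\<lambda>xs. qcode (f xs) (g xs))"
proof -
  have "rc X k (\<lambda>xs. triangle ((12 * g xs + 6) + (2 * 3 ^ Suc (f xs) - 1)) + (12 * g xs + 6))"
    by (intro rc_add rc_tri rc_mult rc_const rc_sub rc_pow3 rc_succ assms)
  then show ?thesis by (simp add: qcode_def prod_encode_def)
qed

lemma rc_Nq1: "rc Y 1 (\<lambda>xs. Nq Y (xs ! 0))"
proof -
  have "rc Y (Suc 0) (\<lambda>xs. Nq Y (xs ! 0))"
  proof (rule rc_prim_gen[OF rc_zero])
    show "rc Y (Suc (Suc 0)) (\<lambda>xs. 3 * xs ! 1 + (if qcode (xs ! 0) (xs ! 1) \<in> Y then 2 else 0))"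
      by (intro rc_add rc_mult rc_const rc_if rcp_mem rc_qcode rc_proj) simp_all
    fix n :: nat and ys :: "nat list"
    show "Nq Y ((n # ys) ! 0) = rec_nat 0 (\<lambda>n y. 3 * (n # y # ys) ! 1 + (if qcode ((n # y # ys) ! 0) ((n # y # ys) ! 1) \<in> Y then 2 else 0)) n"
      by (induction n) auto
  qed
  then show ?thesis by simp
qed

lemma rc_to_turing_le:
  assumes "rc X 1 f" "\<And>n. f [n] = (if n \<in> A then 1 else 0)"
  shows "turing_le A X"
proof -
  obtain p where p: "\<forall>xs. length xs = 1 \<longrightarrow> eval X p xs (f xs)" using assms(1) unfolding rc_def by blast
  show ?thesis unfolding turing_le_def
    by (rule exI[of _ p]) (metis p assms(2) length_Cons list.size(3) One_nat_def)
qed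

lemma prog2: "turing_le A (real_code (FF A))"
proof (rule rc_to_turing_le)
  let ?Y = "real_code (FF A)"
  show "rc ?Y 1 (\<lambda>xs. if qcode (xs ! 0) (Nq ?Y (xs ! 0)) \<in> ?Y then 1 else 0)"
    by (intro rc_orc rc_qcode rc_proj rc_Nq1) simp
  fix n show "(\<lambda>xs. if qcode (xs ! 0) (Nq ?Y (xs ! 0)) \<in> ?Y then 1 else 0) [n] = (if n \<in> A then 1 else 0)"
    by (simp add: Nq_eq qcode_mem)
qed

definition dk :: "nat \<Rightarrow> nat" where "dk m = (LEAST k. m < triangle (Suc k))"

lemma dk_props: "triangle (dk m) \<le> m" "m < triangle (dk m) + Suc (dk m)"
proof -
  have ex: "\<exists>k. m < triangle (Suc k)" by (rule exI[of _ m]) simp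
  show "m < triangle (dk m) + Suc (dk m)"
    using LeastI_ex[OF ex] unfolding dk_def by simp
  show "triangle (dk m) \<le> m"
  proof (cases "dk m")
    case 0 then show ?thesis by simp
  next
    case (Suc j)
    then have "j < dk m" by simp
    then have "\<not> m < triangle (Suc j)" unfolding dk_def using not_less_Least by blast
    then show ?thesis using Suc by simp
  qed
qed

definition di :: "nat \<Rightarrow> nat" where "di m = m - triangle (dk m)"
definition db :: "nat \<Rightarrow> nat" where "db m = dk m - di m"

lemma prod_decode_dk: "prod_decode m = (di m, db m)"
proof -
  have "di m \<le> dk m" using dk_props[of m] unfolding di_def by simp
  then have "prod_encode (di m, db m) = m"
    using dk_props[of m] unfolding prod_encode_def db_def di_def by simp
  then show ?thesis by (metis prod_encode_inverse)
qed

lemma rat_code_dk: "rat_code m = real_of_int (int_decode (di m)) / real (Suc (db m))"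
  unfolding rat_code_def prod_decode_dk by simp

lemma rc_dk1: "rc X 1 (\<lambda>xs. dk (xs ! 0))"
proof -
  have "rc X (Suc 0) (\<lambda>xs. LEAST n. (n # xs) ! 1 < triangle (Suc ((n # xs) ! 0)))"
  proof (rule rc_mu_pred)
    show "rcp X (Suc (Suc 0)) (\<lambda>xs. xs ! 1 < triangle (Suc (xs ! 0)))"
      by (intro rcp_less rc_tri rc_succ rc_proj) simp_all
    fix xs :: "nat list"
    show "\<exists>n. (n # xs) ! 1 < triangle (Suc ((n # xs) ! 0))"
      by (rule exI[of _ "xs ! 0"]) simp
  qed
  then show ?thesis unfolding One_nat_def by (rule rc_cong) (simp add: dk_def)
qed

lemma rc_dk: "rc X k f \<Longrightarrow> rc X k (\<lambda>xs. dk (f xs))"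
  by (rule rc_cong[OF rc_comp1[OF rc_dk1]]) auto

lemma rc_di: "rc X k f \<Longrightarrow> rc X k (\<lambda>xs. di (f xs))"
  unfolding di_def by (intro rc_sub rc_tri rc_dk)

lemma rc_db: "rc X k f \<Longrightarrow> rc X k (\<lambda>xs. db (f xs))"
  unfolding db_def by (intro rc_sub rc_di rc_dk)

lemma rc_Ns1: "rc A 1 (\<lambda>xs. Ns A (xs ! 0))"
proof -
  have "rc A (Suc 0) (\<lambda>xs. Ns A (xs ! 0))"
  proof (rule rc_prim_gen[OF rc_zero])
    show "rc A (Suc (Suc 0)) (\<lambda>xs. 3 * xs ! 1 + (if xs ! 0 \<in> A then 2 else 0))"
      by (intro rc_add rc_mult rc_const rc_if rcp_mem rc_proj) simp_all
    fix n :: nat and ys :: "nat list"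
    show "Ns A ((n # ys) ! 0) = rec_nat 0 (\<lambda>n y. 3 * (n # y # ys) ! 1 + (if (n # y # ys) ! 0 \<in> A then 2 else 0)) n"
      by (induction n) auto
  qed
  then show ?thesis by simp
qed

lemma rc_Ns: "rc A k f \<Longrightarrow> rc A k (\<lambda>xs. Ns A (f xs))"
  by (rule rc_cong[OF rc_comp1[OF rc_Ns1]]) auto

definition C1 :: "nat set \<Rightarrow> nat \<Rightarrow> nat \<Rightarrow> nat \<Rightarrow> bool" where
  "C1 A i b n \<longleftrightarrow> odd i \<or> (i div 2) * 3 ^ n < Ns A n * Suc b"
definition C2 :: "nat set \<Rightarrow> nat \<Rightarrow> nat \<Rightarrow> nat \<Rightarrow> bool" where
  "C2 A i b n \<longleftrightarrow> even i \<and> (Ns A n + 1) * Suc b < (i div 2) * 3 ^ n"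
definition nstar :: "nat set \<Rightarrow> nat \<Rightarrow> nat \<Rightarrow> nat" where
  "nstar A i b = (LEAST n. C1 A i b n \<or> C2 A i b n)"

lemma rcp_C12:
  assumes "rc A k f" "rc A k g" "rc A k h"
  shows "rcp A k (\<lambda>xs. C1 A (f xs) (g xs) (h xs))" "rcp A k (\<lambda>xs. C2 A (f xs) (g xs) (h xs))"
  unfolding C1_def C2_def
  by (intro rcp_disj rcp_conj rcp_not rcp_even rcp_less rc_mult rc_div2 rc_pow3 rc_Ns rc_succ rc_add rc_const assms)+

lemma rc_nstar2:
  assumes "\<And>i b. \<exists>n. C1 A i b n \<or> C2 A i b n"
  shows "rc A 2 (\<lambda>xs. nstar A (xs ! 0) (xs ! 1))"
proof -
  have "rc A (Suc (Suc 0)) (\<lambda>xs. LEAST n. C1 A ((n # xs) ! 1) ((n # xs) ! 2) ((n # xs) ! 0) \<or> C2 A ((n # xs) ! 1) ((n # xs) ! 2) ((n # xs) ! 0))"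
  proof (rule rc_mu_pred)
    show "rcp A (Suc (Suc (Suc 0))) (\<lambda>xs. C1 A (xs ! 1) (xs ! 2) (xs ! 0) \<or> C2 A (xs ! 1) (xs ! 2) (xs ! 0))"
      by (intro rcp_disj rcp_C12 rc_proj) simp_all
  qed (use assms in simp)
  then show ?thesis unfolding numeral_2_eq_2 by (rule rc_cong) (simp add: nstar_def numeral_2_eq_2)
qed

lemma rc_nstar:
  assumes "\<And>i b. \<exists>n. C1 A i b n \<or> C2 A i b n" "rc A k f" "rc A k g"
  shows "rc A k (\<lambda>xs. nstar A (f xs) (g xs))"
  by (rule rc_cong[OF rc_comp2[OF rc_nstar2[OF assms(1)] assms(2,3)]]) auto

lemma int_decode_even: "even i \<Longrightarrow> int_decode i = int (i div 2)"
  by (simp add: int_decode_def sum_decode_def)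

lemma int_decode_odd: "odd i \<Longrightarrow> int_decode i < 0"
  by (simp add: int_decode_def sum_decode_def)

lemma div_less_div_iff: "0 < c \<Longrightarrow> 0 < d \<Longrightarrow> (a / c < b / d) = (a * d < b * (c::real))"
  by (simp add: field_simps)

lemma C1_sound:
  assumes "C1 A i b n" shows "real_of_int (int_decode i) / real (Suc b) < FF A"
proof (cases "even i")
  case False
  then have "real_of_int (int_decode i) / real (Suc b) < 0"
    using int_decode_odd[of i] by (simp add: divide_neg_pos)
  then show ?thesis using FF_nonneg[of A] by linarith
next
  case True
  then have "(i div 2) * 3 ^ n < Ns A n * Suc b" using assms unfolding C1_def by simp
  then have "real ((i div 2) * 3 ^ n) < real (Ns A n * Suc b)"
    by (simp only: of_nat_less_iff)
  then have "real (i div 2) * 3 ^ n < real (Ns A n) * real (Suc b)"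
    by (simp only: of_nat_mult of_nat_power of_nat_numeral)
  then have "real (i div 2) / real (Suc b) < real (Ns A n) / 3 ^ n"
    by (subst div_less_div_iff) auto
  then show ?thesis using True FF_lower[of A n] by (simp add: int_decode_even)
qed

lemma C2_sound:
  assumes "C2 A i b n" shows "FF A < real_of_int (int_decode i) / real (Suc b)"
proof -
  have ev: "even i" and "(Ns A n + 1) * Suc b < (i div 2) * 3 ^ n" using assms unfolding C2_def by auto
  then have "real ((Ns A n + 1) * Suc b) < real ((i div 2) * 3 ^ n)"
    by (simp only: of_nat_less_iff)
  then have "(real (Ns A n) + 1) * real (Suc b) < real (i div 2) * 3 ^ n"
    by (simp only: of_nat_mult of_nat_power of_nat_numeral of_nat_add of_nat_1)
  then have "(real (Ns A n) + 1) / 3 ^ n < real (i div 2) / real (Suc b)"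
    by (subst div_less_div_iff) auto
  then show ?thesis using ev FF_upper[of A n] by (simp add: int_decode_even)
qed

lemma C_exists:
  assumes "FF A \<notin> \<rat>" shows "\<exists>n. C1 A i b n \<or> C2 A i b n"
proof -
  define q where "q = real_of_int (int_decode i) / real (Suc b)"
  have "q \<in> \<rat>" unfolding q_def by (intro Rats_divide Rats_of_int Rats_of_nat)
  then have ne: "q \<noteq> FF A" using assms by metis
  have p3: "(1/3::real) ^ n = 1 / 3 ^ n" for n by (simp add: power_divide)
  have up: "FF A \<le> real (Ns A n) / 3 ^ n + 1 / 3 ^ n" for n
    using FF_upper[of A n] by (simp add: add_divide_distrib)
  show ?thesis
  proof (cases "q < FF A")
    case True
    obtain n where n: "(1/3::real) ^ n < FF A - q"
      using real_arch_pow_inv[of "FF A - q" "1/3"] True by auto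
    have "C1 A i b n"
    proof (cases "even i")
      case True
      have qe: "q = real (i div 2) / real (Suc b)" unfolding q_def using True by (simp add: int_decode_even)
      have "q < real (Ns A n) / 3 ^ n" using n up[of n] p3[of n] by linarith
      then have "real (i div 2) * 3 ^ n < real (Ns A n) * real (Suc b)"
        unfolding qe by (subst (asm) div_less_div_iff) auto
      then have "real ((i div 2) * 3 ^ n) < real (Ns A n * Suc b)"
        by (simp only: of_nat_mult of_nat_power of_nat_numeral)
      then have "(i div 2) * 3 ^ n < Ns A n * Suc b"
        by (simp only: of_nat_less_iff)
      then show ?thesis unfolding C1_def by simp
    qed (simp add: C1_def)
    then show ?thesis by blast
  next
    case False
    then have lt: "FF A < q" using ne by auto
    obtain n where n: "(1/3::real) ^ n < q - FF A"
      using real_arch_pow_inv[of "q - FF A" "1/3"] lt by auto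
    have ev: "even i"
    proof (rule ccontr)
      assume "odd i"
      then have "q < 0" unfolding q_def using int_decode_odd[of i] by (simp add: divide_neg_pos)
      then show False using lt FF_nonneg[of A] by linarith
    qed
    have qe: "q = real (i div 2) / real (Suc b)" unfolding q_def using ev by (simp add: int_decode_even)
    have "(real (Ns A n) + 1) / 3 ^ n < q"
      using n FF_lower[of A n] p3[of n] add_divide_distrib[of "real (Ns A n)" 1 "3 ^ n"] by linarith
    then have "(real (Ns A n) + 1) * real (Suc b) < real (i div 2) * 3 ^ n"
      unfolding qe by (subst (asm) div_less_div_iff) auto
    then have "real ((Ns A n + 1) * Suc b) < real ((i div 2) * 3 ^ n)"
      by (simp only: of_nat_mult of_nat_power of_nat_numeral of_nat_add of_nat_1)
    then have "(Ns A n + 1) * Suc b < (i div 2) * 3 ^ n"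
      by (simp only: of_nat_less_iff)
    then have "C2 A i b n" using ev unfolding C2_def by simp
    then show ?thesis by blast
  qed
qed

lemma prog1:
  assumes irr: "FF A \<notin> \<rat>" shows "turing_le (real_code (FF A)) A"
proof (rule rc_to_turing_le)
  have ex: "\<And>i b. \<exists>n. C1 A i b n \<or> C2 A i b n" using C_exists[OF irr] by blast
  show "rc A 1 (\<lambda>xs. if C1 A (di (xs ! 0)) (db (xs ! 0)) (nstar A (di (xs ! 0)) (db (xs ! 0))) then 1 else 0)"
  proof -
    have r0: "rc A 1 (\<lambda>xs. xs ! 0)" by (rule rc_proj) simp
    show ?thesis using rcp_C12(1)[OF rc_di[OF r0] rc_db[OF r0] rc_nstar[OF ex rc_di[OF r0] rc_db[OF r0]]]
      unfolding rcp_def .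
  qed
  fix m
  let ?i = "di m" and ?b = "db m"
  have c: "C1 A ?i ?b (nstar A ?i ?b) \<or> C2 A ?i ?b (nstar A ?i ?b)"
    unfolding nstar_def by (rule LeastI_ex[OF ex])
  have "C1 A ?i ?b (nstar A ?i ?b) \<longleftrightarrow> m \<in> real_code (FF A)"
  proof (cases "C1 A ?i ?b (nstar A ?i ?b)")
    case True
    then show ?thesis unfolding real_code_def rat_code_dk using C1_sound[of A ?i ?b] by simp
  next
    case False
    then have "C2 A ?i ?b (nstar A ?i ?b)" using c by blast
    then show ?thesis unfolding real_code_def rat_code_dk using False C2_sound[of A ?i ?b "nstar A ?i ?b"] by simp
  qed
  then show "(\<lambda>xs. if C1 A (di (xs ! 0)) (db (xs ! 0)) (nstar A (di (xs ! 0)) (db (xs ! 0))) then 1 else 0) [m] =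
      (if m \<in> real_code (FF A) then 1 else 0)" by simp
qed


lemma Ns_cong: "(\<And>k. k < n \<Longrightarrow> k \<in> A \<longleftrightarrow> k \<in> B) \<Longrightarrow> Ns A n = Ns B n"
  by (induction n) auto

definition JJ :: "nat \<Rightarrow> nat set" where "JJ n = (\<lambda>B. Ns B n) ` Pow {..<n}"
definition KS :: "nat \<Rightarrow> real set" where
  "KS n = (\<Union>j\<in>JJ n. {real j / 3 ^ n .. (real j + 1) / 3 ^ n})"
definition KK :: "real set" where "KK = (\<Inter>n. KS n)"

lemma JJ_finite: "finite (JJ n)" unfolding JJ_def by simp

lemma JJ_card: "card (JJ n) \<le> 2 ^ n"
  unfolding JJ_def using card_image_le[of "Pow {..<n}" "\<lambda>B. Ns B n"] by (simp add: card_Pow)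

lemma FF_in_KS: "FF A \<in> KS n"
proof -
  have "Ns A n = Ns (A \<inter> {..<n}) n" by (rule Ns_cong) auto
  then have "Ns A n \<in> JJ n" unfolding JJ_def by blast
  then show ?thesis unfolding KS_def using FF_lower[of A n] FF_upper[of A n] by auto
qed

lemma range_FF_KK: "range FF \<subseteq> KK"
  unfolding KK_def using FF_in_KS by auto

lemma closed_KK: "closed KK"
  unfolding KK_def KS_def using JJ_finite by (intro closed_INT ballI closed_UN) auto

lemma KS_measure: "emeasure lborel (KS n) \<le> ennreal ((2/3) ^ n)"
proof -
  have "emeasure lborel (KS n) \<le> (\<Sum>j\<in>JJ n. emeasure lborel {real j / 3 ^ n .. (real j + 1) / 3 ^ n})"
    unfolding KS_def by (rule emeasure_subadditive_finite[OF JJ_finite]) auto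
  also have "\<dots> = (\<Sum>j\<in>JJ n. ennreal (1 / 3 ^ n))"
  proof (rule sum.cong[OF refl])
    fix j
    have "real j / 3 ^ n \<le> (real j + 1) / 3 ^ n" by (simp add: divide_right_mono)
    then show "emeasure lborel {real j / 3 ^ n .. (real j + 1) / 3 ^ n} = ennreal (1 / 3 ^ n)"
      by (simp add: diff_divide_distrib[symmetric])
  qed
  also have "\<dots> = of_nat (card (JJ n)) * ennreal (1 / 3 ^ n)" by simp
  also have "\<dots> = ennreal (real (card (JJ n)) * (1 / 3 ^ n))"
    by (subst ennreal_mult) (simp_all add: ennreal_of_nat_eq_real_of_nat)
  also have "\<dots> \<le> ennreal ((2/3) ^ n)"
  proof (rule ennreal_leI)
    have "real (card (JJ n)) \<le> 2 ^ n" using JJ_card[of n]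
      by (metis of_nat_le_iff of_nat_numeral of_nat_power)
    then have "real (card (JJ n)) * (1 / 3 ^ n) \<le> 2 ^ n * (1 / 3 ^ n)"
      by (rule mult_right_mono) simp
    then show "real (card (JJ n)) * (1 / 3 ^ n) \<le> (2/3) ^ n" by (simp add: power_divide)
  qed
  finally show ?thesis .
qed

lemma KK_null: "KK \<in> null_sets lborel"
proof -
  have sets: "KK \<in> sets lborel" using closed_KK by (simp add: borel_closed)
  have le: "emeasure lborel KK \<le> ennreal ((2/3) ^ n)" for n
  proof -
    have "KK \<subseteq> KS n" unfolding KK_def by auto
    moreover have "KS n \<in> sets lborel" unfolding KS_def using JJ_finite
      by (intro sets.finite_UN) auto
    ultimately have "emeasure lborel KK \<le> emeasure lborel (KS n)" by (rule emeasure_mono)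
    then show ?thesis by (rule order_trans[OF _ KS_measure])
  qed
  have "emeasure lborel KK = 0"
  proof (rule ccontr)
    assume ne: "emeasure lborel KK \<noteq> 0"
    have "emeasure lborel KK \<le> ennreal 1" using le[of 0] by simp
    then have fin: "emeasure lborel KK \<noteq> top" using neq_top_trans[OF ennreal_neq_top] by blast
    then obtain r where r: "emeasure lborel KK = ennreal r" "0 \<le> r"
      by (cases "emeasure lborel KK") auto
    have rpos: "0 < r" using ne r by (cases "r = 0") auto
    obtain n where n: "(2/3::real) ^ n < r" using real_arch_pow_inv[OF rpos, of "2/3"] by auto
    have "r \<le> (2/3) ^ n" using le[of n] r by simp
    then show False using n by simp
  qed
  then show ?thesis using sets by (simp add: null_sets_def)
qed

lemma range_FF_null: "range FF \<in> null_sets lebesgue"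
  by (rule null_sets_completion_subset[OF range_FF_KK null_sets_completionI[OF KK_null]])

lemma range_FF_nowhere_dense: "nowhere_dense (range FF)"
proof -
  have "closure (range FF) \<subseteq> KK" by (rule closure_minimal[OF range_FF_KK closed_KK])
  then have sub: "interior (closure (range FF)) \<subseteq> interior KK" by (rule interior_mono)
  have "interior KK = {}"
  proof (rule ccontr)
    assume "interior KK \<noteq> {}"
    then obtain x where "x \<in> interior KK" by auto
    then obtain e where e: "e > 0" "ball x e \<subseteq> KK" by (auto simp: mem_interior)
    have "{x - e/2 .. x + e/2} \<subseteq> ball x e" using e(1) by (auto simp: dist_real_def)
    then have "{x - e/2 .. x + e/2} \<subseteq> KK" using e(2) by auto
    then have "emeasure lborel {x - e/2 .. x + e/2} \<le> emeasure lborel KK"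
      using closed_KK by (intro emeasure_mono) (auto simp: borel_closed)
    then have "ennreal e \<le> 0" using e(1) KK_null by (simp add: null_sets_def)
    then show False using e(1) by simp
  qed
  then show ?thesis unfolding nowhere_dense_def using sub by auto
qed

lemma range_FF_meager: "meager (range FF)"
  unfolding meager_def by (rule exI[of _ "\<lambda>n. range FF"]) (auto simp: range_FF_nowhere_dense)


lemma rat_code_surj: assumes "r \<in> \<rat>" shows "\<exists>n. rat_code n = r"
proof -
  obtain a b where b: "b > 0" and r: "r = of_int a / of_int b" using Rats_cases'[OF assms] by blast
  have "real (Suc (nat b - 1)) = of_int b" using b by simp
  then have "rat_code (prod_encode (int_encode a, nat b - 1)) = r"
    unfolding rat_code_def r by simp
  then show ?thesis by blast
qed

lemma real_code_inj: "inj real_code"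
proof (rule injI)
  fix x y :: real assume eq: "real_code x = real_code y"
  show "x = y"
  proof (rule ccontr)
    assume "x \<noteq> y"
    then consider "x < y" | "y < x" by linarith
    then show False
    proof cases
      case 1
      obtain r where "r \<in> \<rat>" "x < r" "r < y" using Rats_dense_in_real[OF 1] by blast
      moreover obtain n where "rat_code n = r" using rat_code_surj[OF \<open>r \<in> \<rat>\<close>] by blast
      ultimately have "n \<in> real_code y" "n \<notin> real_code x" unfolding real_code_def by auto
      then show False using eq by simp
    next
      case 2
      obtain r where "r \<in> \<rat>" "y < r" "r < x" using Rats_dense_in_real[OF 2] by blast
      moreover obtain n where "rat_code n = r" using rat_code_surj[OF \<open>r \<in> \<rat>\<close>] by blast
      ultimately have "n \<in> real_code x" "n \<notin> real_code y" unfolding real_code_def by auto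
      then show False using eq by simp
    qed
  qed
qed

theorem mainTheorem15:
  shows "\<not> (\<exists>S. S \<subseteq> turing_degrees \<and>
            (luzin_set (reals_of_degrees S) \<or> sierpinski_set (reals_of_degrees S)))"
proof
  assume "\<exists>S. S \<subseteq> turing_degrees \<and>
            (luzin_set (reals_of_degrees S) \<or> sierpinski_set (reals_of_degrees S))"
  then obtain S where S: "luzin_set (reals_of_degrees S) \<or> sierpinski_set (reals_of_degrees S)" by blast
  define R where "R = reals_of_degrees S"
  have unc: "uncountable R" and cnt: "countable (R \<inter> range FF)"
    using S range_FF_meager range_FF_null unfolding R_def luzin_set_def sierpinski_set_def by auto
  define g where "g = (\<lambda>x. FF (real_code x))"
  have ginj: "inj g" unfolding g_def using FF_inj real_code_inj by (auto simp: inj_def)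
  define E where "E = {x. g x \<in> \<rat>}"
  have "countable (g ` E)" by (rule countable_subset[OF _ countable_rat]) (auto simp: E_def)
  then have cE: "countable E" using ginj by (auto intro: countable_image_inj_on inj_on_subset)
  have sub: "g ` (R - E) \<subseteq> R \<inter> range FF"
  proof
    fix y assume "y \<in> g ` (R - E)"
    then obtain x where x: "x \<in> R" "x \<notin> E" and y: "y = g x" by blast
    have irr: "FF (real_code x) \<notin> \<rat>" using x(2) unfolding E_def g_def by simp
    have "turing_equiv_real y x"
      unfolding turing_equiv_real_def y g_def using prog1[OF irr] prog2[of "real_code x"] by simp
    then have "turing_degree y = turing_degree x" by (rule turing_degree_eq)
    then have "y \<in> R" using x(1) unfolding R_def reals_of_degrees_def by simp
    then show "y \<in> R \<inter> range FF" unfolding y g_def by simp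
  qed
  then have "countable (g ` (R - E))" using cnt countable_subset by blast
  then have "countable (R - E)" using ginj by (auto intro: countable_image_inj_on inj_on_subset)
  then have "countable R" using cE countable_Un[of "R - E" E] countable_subset[of R "(R - E) \<union> E"] by blast
  then show False using unc by simp
qed
end
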